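(* For every formula $\phi$, if $\vdash_{\mathsf{BB'IW}}\phi$, then $\phi$ is $\Lambda_{\mathrm{NF}}$-inhabited.
   Context: Formulas are built from propositional atoms with $\to$. $\vdash_{\mathsf{BB'IW}}\phi$ means that there is a combinator, built by application from the constants ${\sf B},{\sf B'},{\sf I},{\sf W}$, of type $\phi$, where the constants receive as types all instances of, respectively, $(\chi\to\psi)\to((\phi\to\chi)\to(\phi\to\psi))$, $(\phi\to\chi)\to((\chi\to\psi)\to(\phi\to\psi))$, $\phi\to\phi$, $(\phi\to(\phi\to\chi))\to(\phi\to\chi)$, and an application $MN$ has type $\psi$ when $M$ has type $\chi\to\psi$ and $N$ type $\chi$ (equivalently, $\phi$ is derivable from these axiom schemes by modus ponens). Let $\mathcal X$ be a countably infinite set of variables with an injective map $\mathcal O:\mathcal X\to\mathbb N$; write $x<y$ iff $\mathcal O(x)<\mathcal O(y)$. Terms are terms of pure $\lambda$-calculus over $\mathcal X$, not identified up to $\alpha$-conversion; two distinct $\lambda$'s never bind the same variable and no variable is both free and bound in a term. HRM terms: every variable; $\lambda x.M$ if $M$ is HRM and $x$ is the greatest free variable of $M$; $(MN)$ if $M,N$ are HRM and for each free variable $x$ of $M$ there is a free variable $y$ of $N$ with $x\le y$. Fix $\Omega$ from variables to formulas with $\Omega^{-1}(\phi)$ infinite for all $\phi$. Typing: $x:\Omega(x)$; if $x:\chi$, $M:\psi$ and $\lambda x.M$ is HRM then $\lambda x.M:\chi\to\psi$; if $M:\chi\to\psi$, $N:\chi$, $(MN)$ HRM then $(MN):\psi$.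 $\Lambda_{\mathrm{NF}}$ is the set of typed terms in $\beta$-normal form; $\phi$ is $\Lambda_{\mathrm{NF}}$-inhabited if some closed term of $\Lambda_{\mathrm{NF}}$ has type $\phi$. *)

theory Defs
  imports Main
begin

datatype 'a form = Atom 'a | Imp "'a form" "'a form"

datatype comb = CB | CB' | CI | CW | CApp comb comb

inductive ctype :: "comb \<Rightarrow> 'a form \<Rightarrow> bool" where
  ctB: "ctype CB (Imp (Imp chi psi) (Imp (Imp phi chi) (Imp phi psi)))"
| ctB': "ctype CB' (Imp (Imp phi chi) (Imp (Imp chi psi) (Imp phi psi)))"
| ctI: "ctype CI (Imp phi phi)"
| ctW: "ctype CW (Imp (Imp phi (Imp phi chi)) (Imp phi chi))"
| ctApp: "ctype M (Imp chi psi) \<Longrightarrow> ctype N chi \<Longrightarrow> ctype (CApp M N) psi"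

definition BBIW_provable :: "'a form \<Rightarrow> bool" where
  "BBIW_provable phi \<longleftrightarrow> (\<exists>c. ctype c phi)"

section \<open>Lambda terms (not identified up to alpha)\<close>

datatype 'v lterm = Var 'v | Lam 'v "'v lterm" | App "'v lterm" "'v lterm"

fun fv :: "'v lterm \<Rightarrow> 'v set" where
  "fv (Var x) = {x}"
| "fv (Lam x M) = fv M - {x}"
| "fv (App M N) = fv M \<union> fv N"

fun bvs :: "'v lterm \<Rightarrow> 'v list" where
  "bvs (Var x) = []"
| "bvs (Lam x M) = x # bvs M"
| "bvs (App M N) = bvs M @ bvs N"

text \<open>Variable convention: distinct lambdas bind distinct variables,
  and no variable is both free and bound.\<close>
definition wf_term :: "'v lterm \<Rightarrow> bool" where
  "wf_term M \<longleftrightarrow> distinct (bvs M) \<and> fv M \<inter> set (bvs M) = {}"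

fun HRM :: "('v \<Rightarrow> nat) \<Rightarrow> 'v lterm \<Rightarrow> bool" where
  "HRM ord (Var x) = True"
| "HRM ord (Lam x M) = (HRM ord M \<and> x \<in> fv M \<and> (\<forall>y\<in>fv M. ord y \<le> ord x))"
| "HRM ord (App M N) = (HRM ord M \<and> HRM ord N \<and> (\<forall>x\<in>fv M. \<exists>y\<in>fv N. ord x \<le> ord y))"

inductive typed :: "('v \<Rightarrow> nat) \<Rightarrow> ('v \<Rightarrow> 'a form) \<Rightarrow> 'v lterm \<Rightarrow> 'a form \<Rightarrow> bool"
  for ord :: "'v \<Rightarrow> nat" and Omega :: "'v \<Rightarrow> 'a form" where
  tVar: "typed ord Omega (Var x) (Omega x)"
| tLam: "typed ord Omega M psi \<Longrightarrow> HRM ord (Lam x M) \<Longrightarrow>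
         typed ord Omega (Lam x M) (Imp (Omega x) psi)"
| tApp: "typed ord Omega M (Imp chi psi) \<Longrightarrow> typed ord Omega N chi \<Longrightarrow> HRM ord (App M N) \<Longrightarrow>
         typed ord Omega (App M N) psi"

fun beta_normal :: "'v lterm \<Rightarrow> bool" where
  "beta_normal (Var x) = True"
| "beta_normal (Lam x M) = beta_normal M"
| "beta_normal (App (Lam x M) N) = False"
| "beta_normal (App (Var x) N) = beta_normal N"
| "beta_normal (App (App M1 M2) N) = (beta_normal (App M1 M2) \<and> beta_normal N)"

definition NF_inhabited :: "('v \<Rightarrow> nat) \<Rightarrow> ('v \<Rightarrow> 'a form) \<Rightarrow> 'a form \<Rightarrow> bool" where
  "NF_inhabited ord Omega phi \<longleftrightarrow>
     (\<exists>M. wf_term M \<and> beta_normal M \<and> fv M = {} \<and> typed ord Omega M phi)"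

end

theory Submission
  imports Defs
begin



datatype 'a tm = V nat | L "'a form" "'a tm" | Ap "'a tm" "'a tm"

fun fvs :: "'a tm \<Rightarrow> nat set" where
  "fvs (V j) = {j}"
| "fvs (L S t) = {w. Suc w \<in> fvs t}"
| "fvs (Ap a b) = fvs a \<union> fvs b"

fun lift :: "nat \<Rightarrow> nat \<Rightarrow> 'a tm \<Rightarrow> 'a tm" where
  "lift n k (V j) = V (if j < k then j else j + n)"
| "lift n k (L S t) = L S (lift n (Suc k) t)"
| "lift n k (Ap a b) = Ap (lift n k a) (lift n k b)"

fun hdv :: "'a tm \<Rightarrow> nat option" where
  "hdv (V j) = Some j"
| "hdv (L S t) = None"
| "hdv (Ap a b) = hdv a"

fun nargs :: "'a tm \<Rightarrow> nat" where
  "nargs (Ap a b) = Suc (nargs a)"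
| "nargs _ = 0"

fun isL :: "'a tm \<Rightarrow> bool" where
  "isL (L S t) = True"
| "isL _ = False"

fun cod :: "'a form \<Rightarrow> 'a form" where
  "cod (Imp A B) = B"
| "cod (Atom x) = Atom x"

definition rty :: "'a form \<Rightarrow> nat \<Rightarrow> 'a form" where
  "rty T n = (cod ^^ n) T"

lemma size_cod: "size (cod T) \<le> size T"
  by (cases T) auto

lemma size_rty: "size (rty T n) \<le> size T"
  unfolding rty_def by (induct n) (auto intro: order_trans[OF size_cod])

function (sequential) sub :: "'a form \<Rightarrow> 'a tm \<Rightarrow> nat \<Rightarrow> 'a tm \<Rightarrow> 'a tm"
  and napp :: "'a form \<Rightarrow> 'a tm \<Rightarrow> 'a tm \<Rightarrow> 'a tm" where
  "sub T (V j) i u = (if j < i then V j else if j = i then lift i 0 u else V (j - 1))"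
| "sub T (L S t) i u = L S (sub T t (Suc i) u)"
| "sub T (Ap t1 t2) i u = (if hdv t1 = Some i
      then napp (rty T (nargs t1)) (sub T t1 i u) (sub T t2 i u)
      else Ap (sub T t1 i u) (sub T t2 i u))"
| "napp (Imp A B) (L S b) a = sub A b 0 a"
| "napp T f a = (if isL f then f else Ap f a)"
  by pat_completeness auto
termination
  apply (relation "inv_image (less_than <*lex*> less_than <*lex*> less_than)
     (\<lambda>x. case x of Inl (T,t,_,_) \<Rightarrow> (size T, 1::nat, size t) | Inr (T,_,_) \<Rightarrow> (size T, 0, 0))")
  apply auto
  using size_rty le_neq_implies_less apply blast+
  done




inductive ty :: "(nat \<Rightarrow> 'a form) \<Rightarrow> 'a tm \<Rightarrow> 'a form \<Rightarrow> bool" where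
  tyV: "ty G (V j) (G j)"
| tyL: "ty (case_nat S G) t T \<Longrightarrow> ty G (L S t) (Imp S T)"
| tyAp: "ty G a (Imp A B) \<Longrightarrow> ty G b A \<Longrightarrow> ty G (Ap a b) B"

inductive_cases tyVE: "ty G (V j) T"
inductive_cases tyLE: "ty G (L S t) T"
inductive_cases tyApE: "ty G (Ap a b) T"

fun nf :: "'a tm \<Rightarrow> bool" where
  "nf (V j) = True"
| "nf (L S t) = nf t"
| "nf (Ap a b) = (nf a \<and> nf b \<and> \<not> isL a)"

fun hrm :: "'a tm \<Rightarrow> bool" where
  "hrm (V j) = True"
| "hrm (L S t) = (hrm t \<and> 0 \<in> fvs t)"
| "hrm (Ap a b) = (hrm a \<and> hrm b \<and> (\<forall>w\<in>fvs a. \<exists>k\<in>fvs b. k \<le> w))"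

lemma fvs_lift: "fvs (lift n k t) = (\<lambda>j. if j < k then j else j + n) ` fvs t"
proof (induct t arbitrary: k)
  case (L S t)
  show ?case
  proof (rule set_eqI, rule iffI)
    fix w assume "w \<in> fvs (lift n k (L S t))"
    then have "Suc w \<in> (\<lambda>j. if j < Suc k then j else j + n) ` fvs t" using L[of "Suc k"] by simp
    then obtain j where j: "j \<in> fvs t" "Suc w = (if j < Suc k then j else j + n)" by blast
    then obtain j' where "j = Suc j'" by (cases j) auto
    with j show "w \<in> (\<lambda>j. if j < k then j else j + n) ` fvs (L S t)"
      by (intro image_eqI[of _ _ j']) (auto split: if_splits)
  next
    fix w assume "w \<in> (\<lambda>j. if j < k then j else j + n) ` fvs (L S t)"
    then obtain j where j: "Suc j \<in> fvs t" "w = (if j < k then j else j + n)" by auto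
    then have "Suc w \<in> (\<lambda>j. if j < Suc k then j else j + n) ` fvs t"
      by (intro image_eqI[of _ _ "Suc j"]) auto
    then show "w \<in> fvs (lift n k (L S t))" using L[of "Suc k"] by simp
  qed
qed auto

lemma hrm_lift: "hrm t \<Longrightarrow> hrm (lift n k t)"
proof (induct t arbitrary: k)
  case (L S t) then show ?case by (auto simp: fvs_lift image_iff)
next
  case (Ap a b)
  have "\<exists>k'\<in>fvs (lift n k b). k' \<le> w" if "w \<in> fvs (lift n k a)" for w
  proof -
    from that obtain j where j: "j \<in> fvs a" "w = (if j < k then j else j + n)" by (auto simp: fvs_lift)
    with Ap obtain k0 where "k0 \<in> fvs b" "k0 \<le> j" by auto
    then show ?thesis using j by (intro bexI[of _ "if k0 < k then k0 else k0 + n"]) (auto simp: fvs_lift)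
  qed
  then show ?case using Ap by auto
qed auto

lemma isL_lift: "isL (lift n k t) = isL t" by (cases t) auto

lemma nf_lift: "nf t \<Longrightarrow> nf (lift n k t)"
  by (induct t arbitrary: k) (auto simp: isL_lift)

lemma ty_lift: "ty G t T \<Longrightarrow> (\<forall>j. G' (if j < k then j else j + n) = G j) \<Longrightarrow> ty G' (lift n k t) T"
proof (induct arbitrary: G' k rule: ty.induct)
  case (tyV G j) then show ?case by (metis lift.simps(1) ty.tyV)
next
  case (tyL S G t T)
  have "\<forall>j. case_nat S G' (if j < Suc k then j else j + n) = case_nat S G j"
  proof
    fix j show "case_nat S G' (if j < Suc k then j else j + n) = case_nat S G j"
      using tyL(3)[rule_format, of "j - 1"] by (cases j) (auto split: if_splits)
  qed
  then show ?case using tyL(2) by (auto intro: ty.tyL)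
next
  case (tyAp G a A B b) then show ?case by (metis lift.simps(3) ty.tyAp)
qed

lemma ty_hdv: "ty G t S \<Longrightarrow> hdv t = Some i \<Longrightarrow> S = rty (G i) (nargs t)"
proof (induct rule: ty.induct)
  case (tyAp G a A B b)
  then have "Imp A B = rty (G i) (nargs a)" by simp
  then show ?case by (simp add: rty_def) (metis cod.simps(1))
qed (auto simp: rty_def)

definition cnd :: "'a tm \<Rightarrow> nat \<Rightarrow> 'a tm \<Rightarrow> bool" where
  "cnd t i u \<longleftrightarrow> (\<forall>w\<in>fvs t. i < w \<longrightarrow> (\<exists>k\<in>fvs u. k + i + 1 \<le> w))"

definition inFV :: "'a tm \<Rightarrow> nat \<Rightarrow> 'a tm \<Rightarrow> nat \<Rightarrow> bool" where
  "inFV t i u w \<longleftrightarrow> (w < i \<and> w \<in> fvs t) \<or> (i \<le> w \<and> Suc w \<in> fvs t) \<or> (i \<in> fvs t \<and> i \<le> w \<and> w - i \<in> fvs u)"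

definition Psub :: "'a form \<Rightarrow> 'a tm \<Rightarrow> nat \<Rightarrow> 'a tm \<Rightarrow> bool" where
  "Psub T t i u \<longleftrightarrow> (\<forall>G D D0 S. ty G t S \<longrightarrow> G i = T \<longrightarrow> (\<forall>j. D j = G (if j < i then j else Suc j))
     \<longrightarrow> (\<forall>j. D (j + i) = D0 j) \<longrightarrow> ty D0 u T \<longrightarrow> nf t \<longrightarrow> nf u \<longrightarrow> hrm t \<longrightarrow> hrm u \<longrightarrow> cnd t i u \<longrightarrow>
     ty D (sub T t i u) S \<and> nf (sub T t i u) \<and> hrm (sub T t i u) \<and> (\<forall>w. w \<in> fvs (sub T t i u) \<longleftrightarrow> inFV t i u w))"

definition Qnapp :: "'a form \<Rightarrow> 'a tm \<Rightarrow> 'a tm \<Rightarrow> bool" where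
  "Qnapp T f a \<longleftrightarrow> (\<forall>D A B. T = Imp A B \<longrightarrow> ty D f T \<longrightarrow> ty D a A \<longrightarrow> nf f \<longrightarrow> nf a \<longrightarrow> hrm f \<longrightarrow> hrm a
     \<longrightarrow> (\<forall>w\<in>fvs f. \<exists>k\<in>fvs a. k \<le> w) \<longrightarrow>
     ty D (napp T f a) B \<and> nf (napp T f a) \<and> hrm (napp T f a) \<and> fvs (napp T f a) = fvs f \<union> fvs a)"




lemma case_V: "Psub T (V j) i u"
  unfolding Psub_def
proof (intro allI impI)
  fix G D D0 S
  assume ty: "ty G (V j) S" and Gi: "G i = T" and D: "\<forall>j. D j = G (if j < i then j else Suc j)"
    and D0: "\<forall>j. D (j + i) = D0 j" and tu: "ty D0 u T" and nfu: "nf u" and hu: "hrm u"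
  from ty have S: "S = G j" by (cases rule: tyVE) auto
  show "ty D (sub T (V j) i u) S \<and> nf (sub T (V j) i u) \<and> hrm (sub T (V j) i u) \<and>
    (\<forall>w. w \<in> fvs (sub T (V j) i u) \<longleftrightarrow> inFV (V j) i u w)"
  proof (cases "j < i")
    case True
    then have "D j = S" using D S by simp
    then show ?thesis using True by (auto simp: inFV_def intro: tyV[of D j, simplified])
  next
    case False
    show ?thesis
    proof (cases "j = i")
      case True
      have "ty D (lift i 0 u) T" using ty_lift[OF tu, where k=0 and G'=D and n=i] D0 by simp
      moreover have "w \<in> fvs (lift i 0 u) \<longleftrightarrow> inFV (V j) i u w" for w
        using True by (auto simp: fvs_lift inFV_def image_iff intro: bexI[of _ "w - i"])
      ultimately show ?thesis using True S Gi nf_lift[OF nfu] hrm_lift[OF hu] by auto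
    next
      case False2: False
      then have "D (j - 1) = S" using D[rule_format, of "j - 1"] S False by auto
      then have "ty D (V (j - 1)) S" by (metis tyV)
      then show ?thesis using False False2 by (auto simp: inFV_def)
    qed
  qed
qed

lemma case_L: "Psub T t (Suc i) u \<Longrightarrow> Psub T (L S' t) i u"
  unfolding Psub_def
proof (intro allI impI)
  fix G D D0 S
  assume IH: "\<forall>G D D0 S. ty G t S \<longrightarrow> G (Suc i) = T \<longrightarrow> (\<forall>j. D j = G (if j < Suc i then j else Suc j))
     \<longrightarrow> (\<forall>j. D (j + Suc i) = D0 j) \<longrightarrow> ty D0 u T \<longrightarrow> nf t \<longrightarrow> nf u \<longrightarrow> hrm t \<longrightarrow> hrm u \<longrightarrow> cnd t (Suc i) u \<longrightarrow>
     ty D (sub T t (Suc i) u) S \<and> nf (sub T t (Suc i) u) \<and> hrm (sub T t (Suc i) u) \<and> (\<forall>w. w \<in> fvs (sub T t (Suc i) u) \<longleftrightarrow> inFV t (Suc i) u w)"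
  assume ty: "ty G (L S' t) S" and Gi: "G i = T" and D: "\<forall>j. D j = G (if j < i then j else Suc j)"
    and D0: "\<forall>j. D (j + i) = D0 j" and tu: "ty D0 u T" and nft: "nf (L S' t)" and nfu: "nf u"
    and ht: "hrm (L S' t)" and hu: "hrm u" and c: "cnd (L S' t) i u"
  from ty obtain S2 where S: "S = Imp S' S2" and tt: "ty (case_nat S' G) t S2" by (cases rule: tyLE) auto
  have D': "\<forall>j. case_nat S' D j = case_nat S' G (if j < Suc i then j else Suc j)"
  proof
    fix j show "case_nat S' D j = case_nat S' G (if j < Suc i then j else Suc j)"
      using D by (cases j) auto
  qed
  have D0': "\<forall>j. case_nat S' D (j + Suc i) = D0 j" using D0 by simp
  have c': "cnd t (Suc i) u"
    unfolding cnd_def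
  proof (intro ballI impI)
    fix w assume w: "w \<in> fvs t" "Suc i < w"
    then have "w - 1 \<in> fvs (L S' t)" "i < w - 1" by auto
    then obtain k where "k \<in> fvs u" "k + i + 1 \<le> w - 1" using c unfolding cnd_def by blast
    then show "\<exists>k\<in>fvs u. k + Suc i + 1 \<le> w" using w(2) by (intro bexI[of _ k]) auto
  qed
  have R: "ty (case_nat S' D) (sub T t (Suc i) u) S2 \<and> nf (sub T t (Suc i) u) \<and> hrm (sub T t (Suc i) u) \<and>
      (\<forall>w. w \<in> fvs (sub T t (Suc i) u) \<longleftrightarrow> inFV t (Suc i) u w)"
  proof -
    have "nf t" "hrm t" "case_nat S' G (Suc i) = T" using nft ht Gi by auto
    then show ?thesis using IH tt D' D0' tu nfu hu c' by blast
  qed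
  have F: "\<forall>w. w \<in> fvs (sub T (L S' t) i u) \<longleftrightarrow> inFV (L S' t) i u w"
    using R by (auto simp: inFV_def)
  have "0 \<in> fvs (sub T t (Suc i) u)" using R ht by (simp add: inFV_def)
  then show "ty D (sub T (L S' t) i u) S \<and> nf (sub T (L S' t) i u) \<and> hrm (sub T (L S' t) i u) \<and>
    (\<forall>w. w \<in> fvs (sub T (L S' t) i u) \<longleftrightarrow> inFV (L S' t) i u w)"
    using R F S by (auto intro: tyL)
qed

lemma ap_cond:
  assumes h: "hrm (Ap t1 t2)" and c: "cnd (Ap t1 t2) i u"
    and F1: "\<forall>w. w \<in> F1 \<longleftrightarrow> inFV t1 i u w" and F2: "\<forall>w. w \<in> F2 \<longleftrightarrow> inFV t2 i u w"
  shows "\<forall>w\<in>F1. \<exists>k\<in>F2. k \<le> w"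
proof
  fix w assume "w \<in> F1"
  then have w: "inFV t1 i u w" using F1 by auto
  have hc: "\<forall>w\<in>fvs t1. \<exists>k\<in>fvs t2. k \<le> w" using h by simp
  consider "w < i" "w \<in> fvs t1" | "i \<le> w" "Suc w \<in> fvs t1" | "i \<in> fvs t1" "i \<le> w" "w - i \<in> fvs u"
    using w unfolding inFV_def by blast
  then show "\<exists>k\<in>F2. k \<le> w"
  proof cases
    case 1
    then obtain k where "k \<in> fvs t2" "k \<le> w" using hc by blast
    then show ?thesis using 1 F2 unfolding inFV_def by auto
  next
    case 2
    then obtain k where k: "k \<in> fvs t2" "k \<le> Suc w" using hc by blast
    show ?thesis
    proof (cases "k < i")
      case True then show ?thesis using k F2 2 unfolding inFV_def by (intro bexI[of _ k]) auto
    next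
      case False
      show ?thesis
      proof (cases "k = i")
        case True
        have "Suc w \<in> fvs (Ap t1 t2)" "i < Suc w" using 2 by auto
        then obtain k' where "k' \<in> fvs u" "k' + i + 1 \<le> Suc w" using c unfolding cnd_def by blast
        then show ?thesis using True k F2 unfolding inFV_def
          by (intro bexI[of _ "k' + i"]) auto
      next
        case False2: False
        then obtain k0 where "k = Suc k0" using False by (cases k) auto
        then show ?thesis using k F2 False False2 unfolding inFV_def
          by (intro bexI[of _ k0]) auto
      qed
    qed
  next
    case 3
    then obtain k where k: "k \<in> fvs t2" "k \<le> i" using hc by blast
    show ?thesis
    proof (cases "k < i")
      case True then show ?thesis using k 3 F2 unfolding inFV_def
        by (intro bexI[of _ k]) auto
    next
      case False
      then have "k = i" using k by simp
      then show ?thesis using k 3 F2 unfolding inFV_def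
        by (intro bexI[of _ w]) auto
    qed
  qed
qed




lemma inFV_Ap: "inFV (Ap t1 t2) i u w \<longleftrightarrow> inFV t1 i u w \<or> inFV t2 i u w"
  by (auto simp: inFV_def)

lemma cnd_Ap: "cnd (Ap t1 t2) i u \<Longrightarrow> cnd t1 i u \<and> cnd t2 i u"
  by (auto simp: cnd_def)

lemma not_isL_sub: "hdv t \<noteq> Some i \<Longrightarrow> \<not> isL t \<Longrightarrow> \<not> isL (sub T t i u)"
  by (cases t) auto

lemma case_Ap:
  assumes P1: "Psub T t1 i u" and P2: "Psub T t2 i u"
    and Q: "hdv t1 = Some i \<Longrightarrow> Qnapp (rty T (nargs t1)) (sub T t1 i u) (sub T t2 i u)"
  shows "Psub T (Ap t1 t2) i u"
  unfolding Psub_def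
proof (intro allI impI)
  fix G D D0 S
  assume ty: "ty G (Ap t1 t2) S" and Gi: "G i = T" and D: "\<forall>j. D j = G (if j < i then j else Suc j)"
    and D0: "\<forall>j. D (j + i) = D0 j" and tu: "ty D0 u T" and nft: "nf (Ap t1 t2)" and nfu: "nf u"
    and ht: "hrm (Ap t1 t2)" and hu: "hrm u" and c: "cnd (Ap t1 t2) i u"
  from ty obtain A where t1: "ty G t1 (Imp A S)" and t2: "ty G t2 A" by (cases rule: tyApE) auto
  from c have c1: "cnd t1 i u" and c2: "cnd t2 i u" using cnd_Ap by auto
  have R1: "ty D (sub T t1 i u) (Imp A S) \<and> nf (sub T t1 i u) \<and> hrm (sub T t1 i u) \<and>
      (\<forall>w. w \<in> fvs (sub T t1 i u) \<longleftrightarrow> inFV t1 i u w)"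
  proof -
    have "nf t1" "hrm t1" using nft ht by auto
    then show ?thesis using P1 t1 Gi D D0 tu nfu hu c1 unfolding Psub_def by blast
  qed
  have R2: "ty D (sub T t2 i u) A \<and> nf (sub T t2 i u) \<and> hrm (sub T t2 i u) \<and>
      (\<forall>w. w \<in> fvs (sub T t2 i u) \<longleftrightarrow> inFV t2 i u w)"
  proof -
    have "nf t2" "hrm t2" using nft ht by auto
    then show ?thesis using P2 t2 Gi D D0 tu nfu hu c2 unfolding Psub_def by blast
  qed
  have AC: "\<forall>w\<in>fvs (sub T t1 i u). \<exists>k\<in>fvs (sub T t2 i u). k \<le> w"
    using ap_cond[OF ht c] R1 R2 by blast
  show "ty D (sub T (Ap t1 t2) i u) S \<and> nf (sub T (Ap t1 t2) i u) \<and> hrm (sub T (Ap t1 t2) i u) \<and>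
    (\<forall>w. w \<in> fvs (sub T (Ap t1 t2) i u) \<longleftrightarrow> inFV (Ap t1 t2) i u w)"
  proof (cases "hdv t1 = Some i")
    case True
    have rt: "rty T (nargs t1) = Imp A S" using ty_hdv[OF t1 True] Gi by simp
    have QQ: "Qnapp (Imp A S) (sub T t1 i u) (sub T t2 i u)" using Q[OF True] rt by simp
    have "ty D (napp (Imp A S) (sub T t1 i u) (sub T t2 i u)) S \<and> nf (napp (Imp A S) (sub T t1 i u) (sub T t2 i u))
       \<and> hrm (napp (Imp A S) (sub T t1 i u) (sub T t2 i u)) \<and>
       fvs (napp (Imp A S) (sub T t1 i u) (sub T t2 i u)) = fvs (sub T t1 i u) \<union> fvs (sub T t2 i u)"
      using QQ R1 R2 AC unfolding Qnapp_def by blast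
    then show ?thesis using True rt R1 R2 by (simp add: inFV_Ap)
  next
    case False
    have "\<not> isL t1" using nft by simp
    then have "\<not> isL (sub T t1 i u)" using not_isL_sub False by blast
    then show ?thesis using False R1 R2 AC by (auto simp: inFV_Ap intro: tyAp)
  qed
qed

lemma case_nappL: "Psub A b 0 a \<Longrightarrow> Qnapp (Imp A B) (L S b) a"
  unfolding Qnapp_def
proof (intro allI impI)
  fix D A' B'
  assume P: "Psub A b 0 a" and T: "Imp A B = Imp A' B'" and tf: "ty D (L S b) (Imp A B)"
    and ta: "ty D a A'" and nff: "nf (L S b)" and nfa: "nf a" and hf: "hrm (L S b)" and ha: "hrm a"
    and c: "\<forall>w\<in>fvs (L S b). \<exists>k\<in>fvs a. k \<le> w"
  from T have AB: "A' = A" "B' = B" by auto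
  from tf have SA: "S = A" and tb: "ty (case_nat A D) b B" by (cases rule: tyLE, auto)+
  have cb: "cnd b 0 a" unfolding cnd_def
  proof (intro ballI impI)
    fix w assume "w \<in> fvs b" "0 < w"
    then have "w - 1 \<in> fvs (L S b)" by auto
    then obtain k where "k \<in> fvs a" "k \<le> w - 1" using c by blast
    then show "\<exists>k\<in>fvs a. k + 0 + 1 \<le> w" using \<open>0 < w\<close> by (intro bexI[of _ k]) auto
  qed
  have D1: "\<forall>j. D j = case_nat A D (if j < 0 then j else Suc j)" by simp
  have D2: "\<forall>j. D (j + 0) = D j" by simp
  have G0: "case_nat A D 0 = A" by simp
  have R: "ty D (sub A b 0 a) B \<and> nf (sub A b 0 a) \<and> hrm (sub A b 0 a) \<and>
      (\<forall>w. w \<in> fvs (sub A b 0 a) \<longleftrightarrow> inFV b 0 a w)"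
  proof -
    have "nf b" "hrm b" using nff hf by auto
    then show ?thesis using P tb G0 D1 D2 ta AB nfa ha cb unfolding Psub_def by blast
  qed
  have "0 \<in> fvs b" using hf by simp
  then have "fvs (sub A b 0 a) = fvs (L S b) \<union> fvs a" using R by (auto simp: inFV_def)
  then show "ty D (napp (Imp A B) (L S b) a) B' \<and> nf (napp (Imp A B) (L S b) a) \<and>
     hrm (napp (Imp A B) (L S b) a) \<and> fvs (napp (Imp A B) (L S b) a) = fvs (L S b) \<union> fvs a"
    using R AB by simp
qed

lemma case_nappAtom: "Qnapp (Atom v) f a"
  unfolding Qnapp_def by auto

lemma case_nappN: "\<not> isL f \<Longrightarrow> napp T f a = Ap f a \<Longrightarrow> Qnapp T f a"
  unfolding Qnapp_def by (auto intro: tyAp)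

lemma main: "Psub (T::'a form) t i u" "Qnapp (T'::'a form) f a"
proof (induct T t i u and T' f a rule: sub_napp.induct)
  case (1 T j i u) then show ?case by (rule case_V)
next
  case (2 T S t i u) then show ?case by (rule case_L)
next
  case (3 T t1 t2 i u) then show ?case by (cases "hdv t1 = Some i") (auto intro: case_Ap)
next
  case (4 A B S b a) then show ?case by (rule case_nappL)
next
  case ("5_1" v f a) then show ?case by (rule case_nappAtom)
next
  case ("5_2" T v a) then show ?case by (intro case_nappN) (cases T, auto)
next
  case ("5_3" T v va a) then show ?case by (intro case_nappN) (cases T, auto)
qed




lemma tyV': "G j = T \<Longrightarrow> ty G (V j) T" using tyV by metis

lemma comb: "ctype c phi \<Longrightarrow> \<exists>t. ty G t phi \<and> nf t \<and> hrm t \<and> fvs t = {}"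
proof (induct rule: ctype.induct)
  case (ctB chi psi phi)
  let ?t = "L (Imp chi psi) (L (Imp phi chi) (L phi (Ap (V 2) (Ap (V 1) (V 0)))))"
  have "ty G ?t (Imp (Imp chi psi) (Imp (Imp phi chi) (Imp phi psi)))"
    by (intro tyL tyAp[where A=chi] tyAp[where A=phi] tyV') simp_all
  moreover have "nf ?t \<and> hrm ?t \<and> fvs ?t = {}" by auto
  ultimately show ?case by blast
next
  case (ctB' phi chi psi)
  let ?t = "L (Imp phi chi) (L (Imp chi psi) (L phi (Ap (V 1) (Ap (V 2) (V 0)))))"
  have "ty G ?t (Imp (Imp phi chi) (Imp (Imp chi psi) (Imp phi psi)))"
    by (intro tyL tyAp[where A=chi] tyAp[where A=phi] tyV') simp_all
  moreover have "nf ?t \<and> hrm ?t \<and> fvs ?t = {}" by auto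
  ultimately show ?case by blast
next
  case (ctI phi)
  let ?t = "L phi (V 0)"
  have "ty G ?t (Imp phi phi)"
    by (intro tyL tyV') simp_all
  moreover have "nf ?t \<and> hrm ?t \<and> fvs ?t = {}" by auto
  ultimately show ?case by blast
next
  case (ctW phi chi)
  let ?t = "L (Imp phi (Imp phi chi)) (L phi (Ap (Ap (V 1) (V 0)) (V 0)))"
  have "ty G ?t (Imp (Imp phi (Imp phi chi)) (Imp phi chi))"
    by (intro tyL tyAp[where A=phi] tyV') simp_all
  moreover have "nf ?t \<and> hrm ?t \<and> fvs ?t = {}" by auto
  ultimately show ?case by blast
next
  case (ctApp M chi psi N)
  then obtain t1 t2 where t1: "ty G t1 (Imp chi psi)" "nf t1" "hrm t1" "fvs t1 = {}"
    and t2: "ty G t2 chi" "nf t2" "hrm t2" "fvs t2 = {}" by blast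
  have "ty G (napp (Imp chi psi) t1 t2) psi \<and> nf (napp (Imp chi psi) t1 t2) \<and> hrm (napp (Imp chi psi) t1 t2)
      \<and> fvs (napp (Imp chi psi) t1 t2) = fvs t1 \<union> fvs t2"
    using main(2)[of "Imp chi psi" t1 t2] t1 t2 unfolding Qnapp_def by blast
  then show ?case using t1 t2 by auto
qed




definition chs :: "('v \<Rightarrow> nat) \<Rightarrow> ('v \<Rightarrow> 'a form) \<Rightarrow> nat \<Rightarrow> 'a form \<Rightarrow> 'v" where
  "chs ord Om c S = (SOME v. Om v = S \<and> c \<le> ord v)"

fun nm :: "('v \<Rightarrow> nat) \<Rightarrow> ('v \<Rightarrow> 'a form) \<Rightarrow> (nat \<Rightarrow> 'v) \<Rightarrow> nat \<Rightarrow> 'a tm \<Rightarrow> 'v lterm \<times> nat" where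
  "nm ord Om env c (V j) = (Var (env j), c)"
| "nm ord Om env c (L S t) = (let v = chs ord Om c S; r = nm ord Om (case_nat v env) (Suc (ord v)) t in (Lam v (fst r), snd r))"
| "nm ord Om env c (Ap a b) = (let r1 = nm ord Om env c a; r2 = nm ord Om env (snd r1) b in (App (fst r1) (fst r2), snd r2))"

locale good =
  fixes ord :: "'v \<Rightarrow> nat" and Om :: "'v \<Rightarrow> 'a form"
  assumes good: "\<And>c S. Om (chs ord Om c S) = S \<and> c \<le> ord (chs ord Om c S)"
begin

lemma N1: "c \<le> snd (nm ord Om env c t) \<and> (\<forall>x\<in>set (bvs (fst (nm ord Om env c t))). c \<le> ord x \<and> ord x < snd (nm ord Om env c t))
   \<and> distinct (map ord (bvs (fst (nm ord Om env c t))))"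
proof (induct t arbitrary: env c)
  case (V j) then show ?case by simp
next
  case (L S t)
  define v where "v = chs ord Om c S"
  have cv: "c \<le> ord v" using good v_def by blast
  from L[where env="case_nat v env" and c="Suc (ord v)"] cv show ?case
    by (auto simp: Let_def v_def[symmetric])
next
  case (Ap a b)
  from Ap(1)[where env=env and c=c] Ap(2)[where env=env and c="snd (nm ord Om env c a)"] show ?case
    by (auto simp: Let_def) fastforce+
qed

lemma N2: "(\<forall>j\<in>fvs t. ord (env j) < c) \<Longrightarrow> fv (fst (nm ord Om env c t)) = env ` fvs t"
proof (induct t arbitrary: env c)
  case (V j) then show ?case by simp
next
  case (L S t)
  define v where "v = chs ord Om c S"
  have cv: "c \<le> ord v" using good v_def by blast
  have pre: "\<forall>j\<in>fvs t. ord (case_nat v env j) < Suc (ord v)"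
  proof
    fix j assume "j \<in> fvs t" then show "ord (case_nat v env j) < Suc (ord v)"
      using L(2) cv by (cases j) fastforce+
  qed
  have IH: "fv (fst (nm ord Om (case_nat v env) (Suc (ord v)) t)) = case_nat v env ` fvs t"
    using L(1) pre by blast
  have "case_nat v env ` fvs t - {v} = env ` fvs (L S t)"
  proof (rule set_eqI, rule iffI)
    fix y assume "y \<in> case_nat v env ` fvs t - {v}"
    then obtain j where "j \<in> fvs t" "y = case_nat v env j" "y \<noteq> v" by auto
    then show "y \<in> env ` fvs (L S t)" by (cases j) auto
  next
    fix y assume "y \<in> env ` fvs (L S t)"
    then obtain j where j: "Suc j \<in> fvs t" "y = env j" by auto
    then have "ord y < c" using L(2) by auto
    then have "y \<noteq> v" using cv by auto
    then show "y \<in> case_nat v env ` fvs t - {v}" using j by (auto intro: image_eqI[of _ _ "Suc j"])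
  qed
  then show ?case using IH by (simp add: Let_def v_def[symmetric])
next
  case (Ap a b)
  have c1: "c \<le> snd (nm ord Om env c a)" using N1 by blast
  have fa: "fv (fst (nm ord Om env c a)) = env ` fvs a" using Ap(1) Ap(3) by auto
  have fb: "fv (fst (nm ord Om env (snd (nm ord Om env c a)) b)) = env ` fvs b"
  proof -
    have "\<forall>j\<in>fvs b. ord (env j) < snd (nm ord Om env c a)" using Ap(3) c1 by (auto intro: order_less_le_trans)
    then show ?thesis using Ap(2) by blast
  qed
  show ?case using fa fb by (auto simp: Let_def)
qed

lemma N3: "nf t \<Longrightarrow> beta_normal (fst (nm ord Om env c t))"
proof (induct t arbitrary: env c)
  case (Ap a b)
  show ?case
  proof (cases a)
    case (V j) then show ?thesis using Ap by (simp add: Let_def)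
  next
    case (L S t) then show ?thesis using Ap by simp
  next
    case (Ap a1 a2)
    then show ?thesis using Ap.hyps Ap.prems by (simp add: Let_def)
  qed
qed (auto simp: Let_def)

definition anti :: "(nat \<Rightarrow> 'v) \<Rightarrow> nat set \<Rightarrow> bool" where
  "anti env F \<longleftrightarrow> (\<forall>j\<in>F. \<forall>k\<in>F. j \<le> k \<longrightarrow> ord (env k) \<le> ord (env j))"

lemma N4: "hrm t \<Longrightarrow> (\<forall>j\<in>fvs t. ord (env j) < c) \<Longrightarrow> anti env (fvs t) \<Longrightarrow> HRM ord (fst (nm ord Om env c t))"
proof (induct t arbitrary: env c)
  case (V j) then show ?case by simp
next
  case (L S t)
  define v where "v = chs ord Om c S"
  have cv: "c \<le> ord v" using good v_def by blast
  have pre: "\<forall>j\<in>fvs t. ord (case_nat v env j) < Suc (ord v)"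
  proof
    fix j assume "j \<in> fvs t" then show "ord (case_nat v env j) < Suc (ord v)"
      using L(3) cv by (cases j) fastforce+
  qed
  have an: "anti (case_nat v env) (fvs t)"
    unfolding anti_def
  proof (intro ballI impI)
    fix j k assume jk: "j \<in> fvs t" "k \<in> fvs t" "j \<le> k"
    show "ord (case_nat v env k) \<le> ord (case_nat v env j)"
    proof (cases j)
      case 0 then show ?thesis using jk L(3) cv by (cases k) fastforce+
    next
      case (Suc j')
      then obtain k' where "k = Suc k'" using jk by (cases k) auto
      then show ?thesis using Suc jk L(4) unfolding anti_def by auto
    qed
  qed
  have IH: "HRM ord (fst (nm ord Om (case_nat v env) (Suc (ord v)) t))" using L(1) L(2) pre an by simp
  have F: "fv (fst (nm ord Om (case_nat v env) (Suc (ord v)) t)) = case_nat v env ` fvs t"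
    using N2 pre by blast
  have "v \<in> case_nat v env ` fvs t" using L(2) by (auto intro: image_eqI[of _ _ 0])
  moreover have "\<forall>y\<in>case_nat v env ` fvs t. ord y \<le> ord v"
    using pre by auto
  ultimately show ?case using IH F by (simp add: Let_def v_def[symmetric])
next
  case (Ap a b)
  have c1: "c \<le> snd (nm ord Om env c a)" using N1 by blast
  have pa: "\<forall>j\<in>fvs a. ord (env j) < c" using Ap(4) by auto
  have pb: "\<forall>j\<in>fvs b. ord (env j) < snd (nm ord Om env c a)" using Ap(4) c1 by (auto intro: order_less_le_trans)
  have aa: "anti env (fvs a)" "anti env (fvs b)" using Ap(5) unfolding anti_def by auto
  have fa: "fv (fst (nm ord Om env c a)) = env ` fvs a" using N2 pa by blast
  have fb: "fv (fst (nm ord Om env (snd (nm ord Om env c a)) b)) = env ` fvs b" using N2 pb by blast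
  have ha: "HRM ord (fst (nm ord Om env c a))" using Ap(1) Ap(3) pa aa by simp
  have hb: "HRM ord (fst (nm ord Om env (snd (nm ord Om env c a)) b))" using Ap(2) Ap(3) pb aa by simp
  have "\<forall>x\<in>env ` fvs a. \<exists>y\<in>env ` fvs b. ord x \<le> ord y"
  proof
    fix x assume "x \<in> env ` fvs a"
    then obtain j where j: "j \<in> fvs a" "x = env j" by auto
    then obtain k where k: "k \<in> fvs b" "k \<le> j" using Ap(3) by auto
    then have "ord (env j) \<le> ord (env k)" using Ap(5) j unfolding anti_def by auto
    then show "\<exists>y\<in>env ` fvs b. ord x \<le> ord y" using k j by auto
  qed
  then show ?case using ha hb fa fb by (simp add: Let_def)
qed

lemma N5: "ty G t S \<Longrightarrow> hrm t \<Longrightarrow> (\<forall>j\<in>fvs t. ord (env j) < c) \<Longrightarrow> anti env (fvs t) \<Longrightarrow>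
   (\<forall>j\<in>fvs t. Om (env j) = G j) \<Longrightarrow> typed ord Om (fst (nm ord Om env c t)) S"
proof (induct arbitrary: env c rule: ty.induct)
  case (tyV G j) then show ?case using typed.tVar[of ord Om "env j"] by simp
next
  case (tyL S G t T)
  define v where "v = chs ord Om c S"
  have cv: "c \<le> ord v" "Om v = S" using good v_def by blast+
  have pre: "\<forall>j\<in>fvs t. ord (case_nat v env j) < Suc (ord v)"
  proof
    fix j assume "j \<in> fvs t" then show "ord (case_nat v env j) < Suc (ord v)"
      using tyL(4) cv by (cases j) fastforce+
  qed
  have an: "anti (case_nat v env) (fvs t)"
    unfolding anti_def
  proof (intro ballI impI)
    fix j k assume jk: "j \<in> fvs t" "k \<in> fvs t" "j \<le> k"
    show "ord (case_nat v env k) \<le> ord (case_nat v env j)"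
    proof (cases j)
      case 0 then show ?thesis using jk tyL(4) cv by (cases k) fastforce+
    next
      case (Suc j')
      then obtain k' where "k = Suc k'" using jk by (cases k) auto
      then show ?thesis using Suc jk tyL(5) unfolding anti_def by auto
    qed
  qed
  have om: "\<forall>j\<in>fvs t. Om (case_nat v env j) = case_nat S G j"
  proof
    fix j assume "j \<in> fvs t" then show "Om (case_nat v env j) = case_nat S G j"
      using tyL(6) cv by (cases j) auto
  qed
  have IH: "typed ord Om (fst (nm ord Om (case_nat v env) (Suc (ord v)) t)) T"
    using tyL(2) tyL(3) pre an om by simp
  have H: "HRM ord (fst (nm ord Om env c (L S t)))" using N4 tyL(3-5) by blast
  have "typed ord Om (Lam v (fst (nm ord Om (case_nat v env) (Suc (ord v)) t))) (Imp (Om v) T)"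
    using IH H by (intro typed.tLam) (simp_all add: Let_def v_def[symmetric])
  then show ?case using cv by (simp add: Let_def v_def[symmetric])
next
  case (tyAp G a A B b)
  have c1: "c \<le> snd (nm ord Om env c a)" using N1 by blast
  have pa: "\<forall>j\<in>fvs a. ord (env j) < c" using tyAp(6) by auto
  have pb: "\<forall>j\<in>fvs b. ord (env j) < snd (nm ord Om env c a)" using tyAp(6) c1 by (auto intro: order_less_le_trans)
  have aa: "anti env (fvs a)" "anti env (fvs b)" using tyAp(7) unfolding anti_def by auto
  have ta: "typed ord Om (fst (nm ord Om env c a)) (Imp A B)" using tyAp(2) tyAp(5) pa aa tyAp(8) by simp
  have tb: "typed ord Om (fst (nm ord Om env (snd (nm ord Om env c a)) b)) A" using tyAp(4) tyAp(5) pb aa tyAp(8) by simp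
  have H: "HRM ord (fst (nm ord Om env c (Ap a b)))" using N4 tyAp(5-7) by blast
  show ?case using typed.tApp[OF ta tb] H by (simp add: Let_def)
qed

lemma final: "ty G t S \<Longrightarrow> nf t \<Longrightarrow> hrm t \<Longrightarrow> fvs t = {} \<Longrightarrow> NF_inhabited ord Om S"
proof -
  assume a: "ty G t S" "nf t" "hrm t" "fvs t = {}"
  define M where "M = fst (nm ord Om (\<lambda>_. undefined) 0 t)"
  have "distinct (map ord (bvs M))" using N1 M_def by blast
  then have "distinct (bvs M)" by (simp add: distinct_map)
  moreover have "fv M = {}" using N2[of t "\<lambda>_. undefined" 0] a M_def by simp
  moreover have "beta_normal M" using N3 a M_def by blast
  moreover have "typed ord Om M S" using N5[OF a(1) a(3)] a(4) M_def by (simp add: anti_def)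
  ultimately show ?thesis unfolding NF_inhabited_def wf_term_def by blast
qed

end



theorem lemma1p7:
  fixes ord :: "'v \<Rightarrow> nat" and Omega :: "'v \<Rightarrow> 'a form" and phi :: "'a form"
  assumes "inj ord"
    and "\<forall>psi. infinite (Omega -` {psi})"
    and "BBIW_provable phi"
  shows "NF_inhabited ord Omega phi"
proof -
  obtain c where "ctype c phi" using assms(3) unfolding BBIW_provable_def by blast
  then obtain t where t: "ty (\<lambda>_. phi) t phi" "nf t" "hrm t" "fvs t = {}" using comb by blast
  have g: "Omega (chs ord Omega c S) = S \<and> c \<le> ord (chs ord Omega c S)" for c S
  proof -
    have "\<exists>v. Omega v = S \<and> c \<le> ord v"
    proof (rule ccontr)
      assume "\<not> (\<exists>v. Omega v = S \<and> c \<le> ord v)"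
      then have "ord ` (Omega -` {S}) \<subseteq> {..<c}" by (auto simp: not_le)
      then have "finite (ord ` (Omega -` {S}))" using finite_subset by blast
      then have "finite (Omega -` {S})"
        using assms(1) finite_imageD inj_on_subset subset_UNIV by metis
      then show False using assms(2) by blast
    qed
    then show ?thesis unfolding chs_def by (rule someI_ex)
  qed
  interpret good ord Omega using g by unfold_locales
  show ?thesis using final t by blast
qed

end
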